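(* Let $I\subset[0,+\infty)$ be an open interval, $n\in\mathbb{N}$, $\beta\in\{-1,1\}$, $N\ge n$, $\xi\in[0,1]$, $t_0\in I$ and $T>0$ fixed with $t_0+\beta T\in I$. Let $\{\varpi(\tau),\tau\ge0\}$ be a continuous parameter stochastic process whose mean value and variance functions are continuous and such that $\varpi(s)$ and $\varpi(t)$ are independent for all $s\neq t$, sampled with an equidistant sampling period $T_s$, $m=T/T_s\in\mathbb{N}$. If $\kappa,\mu>-\frac12$, then $e^{\beta T}_{\varpi,m}(t_0)$ converges in mean square to $\int_0^1p^{\beta T}(\tau)E[\varpi(t_0+\beta T\tau)]\,d\tau$ as $T_s\to0$. Moreover, if $E[\varpi(\tau)]=\sum_{i=0}^{n-1}\bar\nu_i\tau^i$ with $\bar\nu_i\in\mathbb{R}$, then $e^{\beta T}_{\varpi,m}(t_0)$ converges in mean square to $0$ as $T_s\to0$.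
   Context: For $a,b>-1$ let $w^{a,b}(t)=t^{b}(1-t)^{a}$, $P_k^{a,b}(t)=\sum_{s=0}^{k}\binom{k+a}{s}\binom{k+b}{k-s}(t-1)^{k-s}t^{s}$, $\|P_k^{a,b}\|^2=\int_0^1 w^{a,b}(P_k^{a,b})^2$. With $q=N-n$, the Jacobi estimator kernel is $$p^{\beta T}(\tau)=\frac{(-1)^n}{(\beta T)^n}\sum_{i=0}^{q}\frac{P_i^{\mu+n,\kappa+n}(\xi)}{\|P_i^{\mu+n,\kappa+n}\|^2}\frac{d^n}{d\tau^n}\Big[w^{\mu+n,\kappa+n}(\tau)P_i^{\mu+n,\kappa+n}(\tau)\Big].$$ Discrete noise error contribution: with nodes $t_i=i/m$ and quadrature weights $w_i/m$ ($i=0,\dots,m$) of a numerical integration method on $[0,1]$, $$e^{\beta T}_{\varpi,m}(t_0)=\sum_{i=0}^{m}\frac{w_i}{m}\,p^{\beta T}(t_i)\,\varpi(t_0+\beta Tt_i).$$ Standing assumptions on the rule: $w_i>0$ for $0<i<m$, $w_0,w_m\ge0$, with $w_0=0$ when $\kappa<0$ and $w_m=0$ when $\mu<0$; the weights are bounded uniformly in $i$ and $m$; and the rule is convergent for the integrands $(p^{\beta T})^2$ and $\tau\mapsto p^{\beta T}(\tau)E[\varpi(t_0+\beta T\tau)]$, i.e. the corresponding weighted sums tend to the integrals over $[0,1]$ as $m\to\infty$. *)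

theory Defs
  imports "HOL-Probability.Probability"
begin

text \<open>Real power with the convention 0^0 = 1 (Isabelle's powr has 0 powr 0 = 0).\<close>
definition rpow :: "real \<Rightarrow> real \<Rightarrow> real" where
  "rpow x a = (if x = 0 \<and> a = 0 then 1 else x powr a)"

definition jac_w :: "real \<Rightarrow> real \<Rightarrow> real \<Rightarrow> real" where
  "jac_w a b t = rpow t b * rpow (1 - t) a"

definition jac_P :: "real \<Rightarrow> real \<Rightarrow> nat \<Rightarrow> real \<Rightarrow> real" where
  "jac_P a b k t = (\<Sum>s=0..k. ((real k + a) gchoose s) * ((real k + b) gchoose (k - s))
                                * (t - 1) ^ (k - s) * t ^ s)"

definition jac_norm2 :: "real \<Rightarrow> real \<Rightarrow> nat \<Rightarrow> real" where
  "jac_norm2 a b k = integral {0..1} (\<lambda>t. jac_w a b t * (jac_P a b k t)^2)"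

fun nderiv01 :: "nat \<Rightarrow> (real \<Rightarrow> real) \<Rightarrow> real \<Rightarrow> real" where
  "nderiv01 0 f = f"
| "nderiv01 (Suc k) f = (\<lambda>x. vector_derivative (nderiv01 k f) (at x within {0..1}))"

definition jac_kernel :: "real \<Rightarrow> real \<Rightarrow> nat \<Rightarrow> nat \<Rightarrow> real \<Rightarrow> real \<Rightarrow> real \<Rightarrow> real \<Rightarrow> real" where
  "jac_kernel \<kappa> \<mu> n N \<xi> \<beta> T \<tau> =
     (-1) ^ n / (\<beta> * T) ^ n *
     (\<Sum>i=0..N - n. jac_P (\<mu> + n) (\<kappa> + n) i \<xi> / jac_norm2 (\<mu> + n) (\<kappa> + n) i *
        nderiv01 n (\<lambda>t. jac_w (\<mu> + n) (\<kappa> + n) t * jac_P (\<mu> + n) (\<kappa> + n) i t) \<tau>)"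

definition noise_err :: "(nat \<Rightarrow> nat \<Rightarrow> real) \<Rightarrow> (real \<Rightarrow> real) \<Rightarrow> (real \<Rightarrow> 'w \<Rightarrow> real)
    \<Rightarrow> real \<Rightarrow> real \<Rightarrow> real \<Rightarrow> nat \<Rightarrow> 'w \<Rightarrow> real" where
  "noise_err qw p X \<beta> T t0 m x =
     (\<Sum>i=0..m. qw m i / real m * p (real i / real m) * X (t0 + \<beta> * T * (real i / real m)) x)"

definition quad_conv :: "(nat \<Rightarrow> nat \<Rightarrow> real) \<Rightarrow> (real \<Rightarrow> real) \<Rightarrow> bool" where
  "quad_conv qw f \<longleftrightarrow>
     (\<lambda>m. \<Sum>i=0..m. qw m i / real m * f (real i / real m)) \<longlonglongrightarrow> integral {0..1} f"

definition ms_conv :: "'w measure \<Rightarrow> (nat \<Rightarrow> 'w \<Rightarrow> real) \<Rightarrow> real \<Rightarrow> bool" where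
  "ms_conv M X L \<longleftrightarrow> (\<lambda>m. prob_space.expectation M (\<lambda>x. (X m x - L)^2)) \<longlonglongrightarrow> 0"

end

theory Submission
  imports Defs "HOL-Computational_Algebra.Polynomial"
begin


definition G :: "real \<Rightarrow> real \<Rightarrow> real poly \<Rightarrow> real \<Rightarrow> real" where
  "G e f q t = t powr e * (1 - t) powr f * poly q t"

definition Gd :: "real \<Rightarrow> real \<Rightarrow> real poly \<Rightarrow> real poly" where
  "Gd e f q = smult e ([:1,-1:] * q) - smult f ([:0,1:] * q) + [:0,1,-1:] * pderiv q"

lemma G_deriv_int:
  assumes "0 < x" "x < 1"
  shows "(G e f q has_real_derivative G (e-1) (f-1) (Gd e f q) x) (at x)"
proof -
  have "((\<lambda>t. t powr e * (1 - t) powr f * poly q t) has_real_derivative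
     e * x powr (e-1) * (1-x) powr f * poly q x - f * x powr e * (1-x) powr (f-1) * poly q x
      + x powr e * (1-x) powr f * poly (pderiv q) x) (at x)"
    using assms by (auto intro!: derivative_eq_intros simp: algebra_simps)
  moreover have "x powr e = x powr (e-1) * x" using assms by (simp add: powr_diff)
  moreover have "(1-x) powr f = (1-x) powr (f-1) * (1-x)" using assms by (simp add: powr_diff)
  ultimately show ?thesis unfolding G_def Gd_def
    by (simp add: algebra_simps)
qed

lemma G_deriv_0:
  assumes "e > 1"
  shows "(G e f q has_real_derivative 0) (at 0 within {0..1})"
proof -
  have lim: "((\<lambda>y. y powr (e-1) * (1-y) powr f * poly q y) \<longlongrightarrow> 0 powr (e-1) * (1-0) powr f * poly q 0) (at 0 within {0..1})"
    using assms by (intro tendsto_intros) (auto simp: eventually_at_filter)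
  have "((\<lambda>y. (G e f q y - G e f q 0) / (y - 0)) \<longlongrightarrow> 0) (at 0 within {0..1})"
  proof (rule Lim_transform_within[OF lim[simplified]])
    show "0 < (1::real)" by simp
    fix y :: real assume "y \<in> {0..1}" "0 < dist y 0" "dist y 0 < 1"
    then have y: "y > 0" by auto
    then have "y powr e = y powr (e-1) * y" by (simp add: powr_diff)
    then show "y powr (e-1) * (1-y) powr f * poly q y = (G e f q y - G e f q 0) / (y - 0)"
      using y by (simp add: G_def)
  qed
  then show ?thesis by (simp add: has_field_derivative_iff)
qed

lemma G_deriv_1:
  assumes "f > 1"
  shows "(G e f q has_real_derivative 0) (at 1 within {0..1})"
proof -
  have lim: "((\<lambda>y. - (y powr e * (1-y) powr (f-1) * poly q y)) \<longlongrightarrow> - (1 powr e * (1-1) powr (f-1) * poly q 1)) (at 1 within {0..1})"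
    using assms by (intro tendsto_intros) (auto simp: eventually_at_filter)
  have "((\<lambda>y. (G e f q y - G e f q 1) / (y - 1)) \<longlongrightarrow> 0) (at 1 within {0..1})"
  proof (rule Lim_transform_within[OF lim[simplified]])
    show "0 < (1::real)" by simp
    fix y :: real assume "y \<in> {0..1}" "0 < dist y 1" "dist y 1 < 1"
    then have y: "y < 1" "y \<ge> 0" by (auto simp: dist_real_def)
    then have "(1-y) powr f = (1-y) powr (f-1) * (1-y)" by (simp add: powr_diff)
    then show "- (y powr e * (1-y) powr (f-1) * poly q y) = (G e f q y - G e f q 1) / (y - 1)"
      using y by (simp add: G_def divide_simps) (simp add: algebra_simps)
  qed
  then show ?thesis by (simp add: has_field_derivative_iff)
qed

lemma G_cont:
  assumes "e > 0" "f > 0"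
  shows "continuous_on {0..1} (G e f q)"
  unfolding G_def using assms
  by (intro continuous_intros continuous_on_powr') auto

lemma G_0 [simp]: "G e f q 0 = 0" and G_1 [simp]: "G e f q 1 = 0"
  by (auto simp: G_def)

lemma G_deriv_within:
  assumes "t \<in> {0..1}" "t \<in> {0<..<1} \<or> (e > 1 \<and> f > 1)"
  shows "(G e f q has_real_derivative G (e-1) (f-1) (Gd e f q) t) (at t within {0..1})"
proof -
  consider "t = 0" | "t = 1" | "t \<in> {0<..<1}" using assms(1) by fastforce
  then show ?thesis
  proof cases
    case 1 then show ?thesis using assms G_deriv_0[of e f q] by auto
  next
    case 2 then show ?thesis using assms G_deriv_1[of f e q] by auto
  next
    case 3 then show ?thesis using G_deriv_int[of t e f q] has_field_derivative_at_within by auto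
  qed
qed

locale jrep =
  fixes f0 :: "real \<Rightarrow> real" and a b :: real and n :: nat and Q :: "real poly"
  assumes f0: "\<And>t. t \<in> {0..1} \<Longrightarrow> f0 t = G b a Q t"
    and ab: "b > real n - 1/2" "a > real n - 1/2"
begin

lemma step:
  assumes k: "k < n" and q: "\<forall>t\<in>{0..1}. nderiv01 k f0 t = G (b - k) (a - k) q t"
    and t: "t \<in> {0..1}" "t \<in> {0<..<1} \<or> Suc k < n"
  shows "nderiv01 (Suc k) f0 t = G (b - Suc k) (a - Suc k) (Gd (b-k) (a-k) q) t"
    and "(nderiv01 k f0 has_real_derivative nderiv01 (Suc k) f0 t) (at t within {0..1})"
proof -
  have "t \<in> {0<..<1} \<or> (b - k > 1 \<and> a - k > 1)" using t ab by auto
  from G_deriv_within[OF t(1) this, of q]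
  have d: "(nderiv01 k f0 has_real_derivative G (b-k-1) (a-k-1) (Gd (b-k) (a-k) q) t) (at t within {0..1})"
    proof (rule has_field_derivative_transform_within[where d=1])
    fix x :: real assume "x \<in> {0..1}"
    then show "G (b - real k) (a - real k) q x = nderiv01 k f0 x" using q by simp
  qed (use t in simp_all)
  have e: "b - real (Suc k) = b - k - 1" "a - real (Suc k) = a - k - 1" by auto
  have "vector_derivative (nderiv01 k f0) (at t within {0..1}) = G (b-k-1) (a-k-1) (Gd (b-k) (a-k) q) t"
  proof (rule vector_derivative_within_closed_interval)
    show "(0::real) < 1" by simp
    show "t \<in> {0..1}" using t by simp
    show "(nderiv01 k f0 has_vector_derivative G (b-k-1) (a-k-1) (Gd (b-k) (a-k) q) t) (at t within {0..1})"
      using d by (simp only: has_real_derivative_iff_has_vector_derivative)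
  qed
  then show 1: "nderiv01 (Suc k) f0 t = G (b - Suc k) (a - Suc k) (Gd (b-k) (a-k) q) t"
    unfolding e by (simp only: nderiv01.simps)
  show "(nderiv01 k f0 has_real_derivative nderiv01 (Suc k) f0 t) (at t within {0..1})"
    using d unfolding 1 e .
qed

lemma rep: "k < n \<Longrightarrow> \<exists>q. \<forall>t\<in>{0..1}. nderiv01 k f0 t = G (b - k) (a - k) q t"
proof (induction k)
  case 0 then show ?case using f0 by auto
next
  case (Suc k)
  then obtain q where q: "\<forall>t\<in>{0..1}. nderiv01 k f0 t = G (b - k) (a - k) q t" by auto
  have "\<forall>t\<in>{0..1}. nderiv01 (Suc k) f0 t = G (b - Suc k) (a - Suc k) (Gd (b-k) (a-k) q) t"
  proof
    fix t :: real assume t: "t \<in> {0..1}"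
    have "Suc k < n" using Suc.prems .
    then show "nderiv01 (Suc k) f0 t = G (b - Suc k) (a - Suc k) (Gd (b-k) (a-k) q) t"
      using step(1)[OF _ q t] by simp
  qed
  then show ?case by blast
qed

lemma cont: "k < n \<Longrightarrow> continuous_on {0..1} (nderiv01 k f0)"
  "k < n \<Longrightarrow> nderiv01 k f0 0 = 0" "k < n \<Longrightarrow> nderiv01 k f0 1 = 0"
proof -
  assume k: "k < n"
  then obtain q where q: "\<forall>t\<in>{0..1}. nderiv01 k f0 t = G (b - k) (a - k) q t" using rep by blast
  have "continuous_on {0..1} (G (b - k) (a - k) q)" using ab k by (intro G_cont) auto
  then show "continuous_on {0..1} (nderiv01 k f0)" using q by (metis (no_types, lifting) continuous_on_cong)
  show "nderiv01 k f0 0 = 0" "nderiv01 k f0 1 = 0" using q by auto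
qed

lemma deriv: assumes "k < n" "t \<in> {0<..<1}"
  shows "(nderiv01 k f0 has_real_derivative nderiv01 (Suc k) f0 t) (at t)"
proof -
  obtain q where q: "\<forall>t\<in>{0..1}. nderiv01 k f0 t = G (b - k) (a - k) q t" using rep assms by blast
  have "(nderiv01 k f0 has_real_derivative nderiv01 (Suc k) f0 t) (at t within {0..1})"
    using step(2)[OF assms(1) q] assms(2) by simp
  then have "(nderiv01 k f0 has_real_derivative nderiv01 (Suc k) f0 t) (at t within {0<..<1})"
    by (rule has_field_derivative_subset) (rule greaterThanLessThan_subseteq_atLeastAtMost_iff[THEN iffD2], simp)
  moreover have "at t within {0<..<1} = at t" using assms(2) by (intro at_within_open) auto
  ultimately show ?thesis by simp
qed

lemma integ: "k \<le> n \<Longrightarrow> \<forall>q. (q = 0 \<or> degree q < k) \<longrightarrow>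
   ((\<lambda>t. nderiv01 k f0 t * poly q t) has_integral 0) {0..1}"
proof (induction k)
  case 0 then show ?case by auto
next
  case (Suc k)
  show ?case
  proof (intro allI impI)
    fix q :: "real poly" assume qd: "q = 0 \<or> degree q < Suc k"
    have pd: "pderiv q = 0 \<or> degree (pderiv q) < k"
    proof (cases "degree q = 0")
      case True then show ?thesis by (simp add: pderiv_eq_0_iff)
    next
      case False then show ?thesis using qd by (auto simp: degree_pderiv)
    qed
    have k: "k < n" using Suc.prems by auto
    have i1: "((\<lambda>t. nderiv01 k f0 t * poly (pderiv q) t) has_integral 0) {0..1}"
      using Suc.IH k pd by auto
    have "((\<lambda>t. nderiv01 (Suc k) f0 t * poly q t + nderiv01 k f0 t * poly (pderiv q) t)
        has_integral (nderiv01 k f0 1 * poly q 1 - nderiv01 k f0 0 * poly q 0)) {0..1}"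
    proof (rule fundamental_theorem_of_calculus_interior)
      show "continuous_on {0..1} (\<lambda>t. nderiv01 k f0 t * poly q t)"
        using cont(1)[OF k] by (intro continuous_intros) auto
      fix t :: real assume t: "t \<in> {0<..<1}"
      show "((\<lambda>t. nderiv01 k f0 t * poly q t) has_vector_derivative
           nderiv01 (Suc k) f0 t * poly q t + nderiv01 k f0 t * poly (pderiv q) t) (at t)"
        unfolding has_real_derivative_iff_has_vector_derivative[symmetric]
        using deriv[OF k t] by (auto intro!: derivative_eq_intros poly_DERIV)
    qed simp
    then have "((\<lambda>t. nderiv01 (Suc k) f0 t * poly q t + nderiv01 k f0 t * poly (pderiv q) t)
        has_integral 0) {0..1}" using cont(2,3)[OF k] by simp
    from has_integral_diff[OF this i1]
    show "((\<lambda>t. nderiv01 (Suc k) f0 t * poly q t) has_integral 0) {0..1}" by simp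
  qed
qed
end

lemma kernel_annih:
  fixes \<kappa> \<mu> \<xi> \<beta> T :: real and n N :: nat and Q :: "real poly"
  assumes ka: "\<kappa> > -1/2" and mu: "\<mu> > -1/2" and n1: "n \<ge> 1" and Q: "Q = 0 \<or> degree Q < n"
  shows "((\<lambda>\<tau>. jac_kernel \<kappa> \<mu> n N \<xi> \<beta> T \<tau> * poly Q \<tau>) has_integral 0) {0..1}"
proof -
  define F where "F i = nderiv01 n (\<lambda>t. jac_w (\<mu> + n) (\<kappa> + n) t * jac_P (\<mu> + n) (\<kappa> + n) i t)" for i
  have each: "((\<lambda>\<tau>. F i \<tau> * poly Q \<tau>) has_integral 0) {0..1}" for i
  proof -
    define PQ where "PQ = (\<Sum>s=0..i. smult (((real i + (\<mu>+n)) gchoose s) * ((real i + (\<kappa>+n)) gchoose (i - s)))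
                      ([:-1,1:]^(i-s) * [:0,1:]^s))"
    have P: "jac_P (\<mu>+n) (\<kappa>+n) i t = poly PQ t" for t
      by (simp add: PQ_def jac_P_def poly_sum algebra_simps)
    interpret jrep "\<lambda>t. jac_w (\<mu> + n) (\<kappa> + n) t * jac_P (\<mu> + n) (\<kappa> + n) i t" "\<mu> + n" "\<kappa> + n" n PQ
    proof
      fix t :: real assume "t \<in> {0..1}"
      have "\<kappa> + n > 0" "\<mu> + n > 0" using ka mu n1 by auto
      then show "jac_w (\<mu> + n) (\<kappa> + n) t * jac_P (\<mu> + n) (\<kappa> + n) i t = G (\<kappa> + n) (\<mu> + n) PQ t"
        by (simp add: jac_w_def rpow_def G_def P)
    next
      show "\<kappa> + n > real n - 1/2" "\<mu> + n > real n - 1/2" using ka mu by auto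
    qed
    have "degree Q < n" using Q n1 by auto
    then show ?thesis using integ[of n] by (simp add: F_def)
  qed
  define c where "c i = jac_P (\<mu> + n) (\<kappa> + n) i \<xi> / jac_norm2 (\<mu> + n) (\<kappa> + n) i" for i
  have "((\<lambda>\<tau>. (-1)^n / (\<beta>*T)^n * (\<Sum>i=0..N-n. c i * (F i \<tau> * poly Q \<tau>))) has_integral
        ((-1)^n / (\<beta>*T)^n * (\<Sum>i=0..N-n. c i * 0))) {0..1}"
    by (intro has_integral_mult_right has_integral_sum each) auto
  moreover have "(\<lambda>\<tau>. jac_kernel \<kappa> \<mu> n N \<xi> \<beta> T \<tau> * poly Q \<tau>) =
     (\<lambda>\<tau>. (-1)^n / (\<beta>*T)^n * (\<Sum>i=0..N-n. c i * (F i \<tau> * poly Q \<tau>)))"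
    unfolding jac_kernel_def c_def F_def
    by (rule ext) (simp add: sum_distrib_right sum_distrib_left mult_ac)
  ultimately show ?thesis by simp
qed



context prob_space begin

lemma L2_integrable:
  fixes f :: "'a \<Rightarrow> real"
  assumes "f \<in> borel_measurable M" "integrable M (\<lambda>x. (f x)^2)"
  shows "integrable M f"
proof (rule Bochner_Integration.integrable_bound[OF Bochner_Integration.integrable_add[OF assms(2) integrable_const[of 1]] assms(1)])
  show "AE x in M. norm (f x) \<le> norm ((f x)^2 + 1)"
  proof (rule AE_I2)
    fix x
    have "\<bar>f x\<bar> \<le> (f x)^2 + 1"
    proof (cases "\<bar>f x\<bar> \<le> 1")
      case True then show ?thesis using zero_le_power2[of "f x"] by linarith
    next
      case False
      then have "\<bar>f x\<bar> * 1 \<le> \<bar>f x\<bar> * \<bar>f x\<bar>" by (intro mult_left_mono) auto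
      then show ?thesis by (simp add: power2_eq_square abs_mult[symmetric])
    qed
    then show "norm (f x) \<le> norm ((f x)^2 + 1)" by simp
  qed
qed

lemma L2_prod:
  fixes f g :: "'a \<Rightarrow> real"
  assumes "f \<in> borel_measurable M" "integrable M (\<lambda>x. (f x)^2)"
    "g \<in> borel_measurable M" "integrable M (\<lambda>x. (g x)^2)"
  shows "integrable M (\<lambda>x. f x * g x)"
proof (rule Bochner_Integration.integrable_bound[OF Bochner_Integration.integrable_add[OF assms(2) assms(4)]])
  show "(\<lambda>x. f x * g x) \<in> borel_measurable M" using assms(1,3) by (rule borel_measurable_times)
  show "AE x in M. norm (f x * g x) \<le> norm ((f x)^2 + (g x)^2)"
  proof (rule AE_I2)
    fix x
    have "0 \<le> (\<bar>f x\<bar> - \<bar>g x\<bar>)^2" by simp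
    then have "2 * (\<bar>f x\<bar> * \<bar>g x\<bar>) \<le> (f x)^2 + (g x)^2"
      unfolding power2_diff power2_abs by linarith
    moreover have "0 \<le> \<bar>f x\<bar> * \<bar>g x\<bar>" by simp
    ultimately have "\<bar>f x * g x\<bar> \<le> (f x)^2 + (g x)^2"
      unfolding abs_mult by linarith
    then show "norm (f x * g x) \<le> norm ((f x)^2 + (g x)^2)" by simp
  qed
qed

lemma centered_sq:
  fixes f :: "'a \<Rightarrow> real"
  assumes "f \<in> borel_measurable M" "integrable M (\<lambda>x. (f x)^2)"
  shows "integrable M (\<lambda>x. (f x - c)^2)"
proof -
  have "integrable M (\<lambda>x. (f x)^2 - 2 * c * f x + c^2)"
    using L2_integrable[OF assms] assms(2)
    by (intro Bochner_Integration.integrable_add Bochner_Integration.integrable_diff integrable_mult_right integrable_const)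
  then show ?thesis by (simp add: power2_diff algebra_simps)
qed

lemma ms_sum:
  fixes Y :: "nat \<Rightarrow> 'a \<Rightarrow> real" and c :: "nat \<Rightarrow> real" and S :: "nat set"
  assumes fin: "finite S"
   and meas: "\<And>i. i\<in>S \<Longrightarrow> Y i \<in> borel_measurable M"
   and sq: "\<And>i. i\<in>S \<Longrightarrow> integrable M (\<lambda>x. (Y i x)^2)"
   and ind: "\<And>i j. i\<in>S \<Longrightarrow> j\<in>S \<Longrightarrow> i\<noteq>j \<Longrightarrow> indep_var borel (Y i) borel (Y j)"
  shows "expectation (\<lambda>x. ((\<Sum>i\<in>S. c i * Y i x) - L)^2) =
     (\<Sum>i\<in>S. (c i)^2 * variance (Y i)) + ((\<Sum>i\<in>S. c i * expectation (Y i)) - L)^2"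
proof -
  define m where "m i = expectation (Y i)" for i
  define Z where "Z i x = Y i x - m i" for i x
  define d where "d = (\<Sum>i\<in>S. c i * m i) - L"
  have pt: "((\<Sum>i\<in>S. c i * Y i x) - L)^2 =
     (\<Sum>i\<in>S. \<Sum>j\<in>S. c i * c j * (Z i x * Z j x)) + 2 * d * (\<Sum>i\<in>S. c i * Z i x) + d^2" for x
  proof -
    have "(\<Sum>i\<in>S. c i * Y i x) - L = (\<Sum>i\<in>S. c i * Z i x) + d"
      by (simp add: Z_def d_def right_diff_distrib sum_subtractf)
    then have "((\<Sum>i\<in>S. c i * Y i x) - L)^2 =
       (\<Sum>i\<in>S. c i * Z i x) * (\<Sum>i\<in>S. c i * Z i x) + 2 * d * (\<Sum>i\<in>S. c i * Z i x) + d^2"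
      by (simp add: power2_eq_square algebra_simps)
    also have "(\<Sum>i\<in>S. c i * Z i x) * (\<Sum>i\<in>S. c i * Z i x) = (\<Sum>i\<in>S. \<Sum>j\<in>S. c i * c j * (Z i x * Z j x))"
      unfolding sum_product by (intro sum.cong refl) (simp add: ac_simps)
    finally show ?thesis .
  qed
  have iY: "integrable M (Y i)" if "i \<in> S" for i using L2_integrable meas sq that by blast
  have mZ: "Z i \<in> borel_measurable M" if "i \<in> S" for i
    unfolding Z_def using meas[OF that] by (intro borel_measurable_diff) auto
  have sqZ: "integrable M (\<lambda>x. (Z i x)^2)" if "i \<in> S" for i
    unfolding Z_def using centered_sq meas sq that by blast
  have iZ: "integrable M (Z i)" if "i \<in> S" for i using L2_integrable mZ sqZ that by blast
  have iZZ: "integrable M (\<lambda>x. Z i x * Z j x)" if "i \<in> S" "j \<in> S" for i j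
    using L2_prod mZ sqZ that by blast
  have EZ: "expectation (Z i) = 0" if "i \<in> S" for i
    unfolding Z_def using iY[OF that] by (simp add: prob_space m_def)
  have EZZ: "expectation (\<lambda>x. Z i x * Z j x) = (if i = j then variance (Y i) else 0)"
    if "i \<in> S" "j \<in> S" for i j
  proof (cases "i = j")
    case True then show ?thesis by (simp add: Z_def m_def power2_eq_square)
  next
    case False
    have "indep_var borel ((\<lambda>y. y - m i) \<circ> Y i) borel ((\<lambda>y. y - m j) \<circ> Y j)"
      by (rule indep_var_compose[OF ind[OF that False]]) auto
    moreover have "Z k = (\<lambda>x. Y k x - m k)" for k by (simp add: Z_def fun_eq_iff)
    ultimately have "indep_var borel (Z i) borel (Z j)" by (simp add: comp_def)
    from indep_var_lebesgue_integral[OF this iZ[OF that(1)] iZ[OF that(2)]]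
    show ?thesis using EZ that False by simp
  qed
  have "expectation (\<lambda>x. ((\<Sum>i\<in>S. c i * Y i x) - L)^2) =
     expectation (\<lambda>x. (\<Sum>i\<in>S. \<Sum>j\<in>S. c i * c j * (Z i x * Z j x)) + 2 * d * (\<Sum>i\<in>S. c i * Z i x) + d^2)"
    unfolding pt ..
  also have "\<dots> = (\<Sum>i\<in>S. \<Sum>j\<in>S. c i * c j * expectation (\<lambda>x. Z i x * Z j x))
        + 2 * d * (\<Sum>i\<in>S. c i * expectation (Z i)) + d^2"
    using iZ iZZ
    by (simp add: Bochner_Integration.integral_add Bochner_Integration.integral_sum
        Bochner_Integration.integrable_sum integral_mult_right_zero prob_space)
  also have "\<dots> = (\<Sum>i\<in>S. (c i)^2 * variance (Y i)) + d^2"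
  proof -
    have "(\<Sum>i\<in>S. \<Sum>j\<in>S. c i * c j * expectation (\<lambda>x. Z i x * Z j x))
        = (\<Sum>i\<in>S. \<Sum>j\<in>S. if j = i then (c i)^2 * variance (Y i) else 0)"
      using EZZ by (intro sum.cong refl) (auto simp: power2_eq_square)
    also have "\<dots> = (\<Sum>i\<in>S. (c i)^2 * variance (Y i))" using fin by simp
    finally show ?thesis using EZ by simp
  qed
  finally show ?thesis by (simp add: d_def m_def)
qed

end

theorem corollary2:
  fixes M :: "'w measure" and X :: "real \<Rightarrow> 'w \<Rightarrow> real"
    and I :: "real set" and n N :: nat and \<beta> \<xi> t0 T \<kappa> \<mu> :: real
    and qw :: "nat \<Rightarrow> nat \<Rightarrow> real"
  defines "p \<equiv> jac_kernel \<kappa> \<mu> n N \<xi> \<beta> T"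
  assumes P: "prob_space M"
    and I: "is_interval I" "open I" "I \<subseteq> {0..}"
    and beta: "\<beta> \<in> {-1, 1}" and nN: "N \<ge> n" and xi: "\<xi> \<in> {0..1}"
    and t0: "t0 \<in> I" and T: "T > 0" "t0 + \<beta> * T \<in> I"
    and rv: "\<And>t. t \<ge> 0 \<Longrightarrow> X t \<in> borel_measurable M"
    and L2: "\<And>t. t \<ge> 0 \<Longrightarrow> integrable M (\<lambda>x. (X t x)^2)"
    and mean_cont: "continuous_on {0..} (\<lambda>t. prob_space.expectation M (X t))"
    and var_cont: "continuous_on {0..} (\<lambda>t. prob_space.variance M (X t))"
    and indep: "\<And>s t. s \<ge> 0 \<Longrightarrow> t \<ge> 0 \<Longrightarrow> s \<noteq> t \<Longrightarrow>
                  prob_space.indep_var M borel (X s) borel (X t)"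
    and w_pos: "\<And>m i. 0 < i \<Longrightarrow> i < m \<Longrightarrow> qw m i > 0"
    and w_end: "\<And>m. qw m 0 \<ge> 0" "\<And>m. qw m m \<ge> 0"
    and w_kappa: "\<kappa> < 0 \<Longrightarrow> (\<forall>m. qw m 0 = 0)"
    and w_mu: "\<mu> < 0 \<Longrightarrow> (\<forall>m. qw m m = 0)"
    and w_bdd: "\<exists>B. \<forall>m i. i \<le> m \<longrightarrow> \<bar>qw m i\<bar> \<le> B"
    and conv1: "quad_conv qw (\<lambda>\<tau>. (p \<tau>)^2)"
    and conv2: "quad_conv qw (\<lambda>\<tau>. p \<tau> * prob_space.expectation M (X (t0 + \<beta> * T * \<tau>)))"
    and kappa: "\<kappa> > -1/2" and mu: "\<mu> > -1/2"
  shows "ms_conv M (noise_err qw p X \<beta> T t0)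
           (integral {0..1} (\<lambda>\<tau>. p \<tau> * prob_space.expectation M (X (t0 + \<beta> * T * \<tau>))))
       \<and> ((\<exists>\<nu>::nat \<Rightarrow> real. \<forall>\<tau>\<ge>0. prob_space.expectation M (X \<tau>) = (\<Sum>i<n. \<nu> i * \<tau> ^ i))
            \<longrightarrow> ms_conv M (noise_err qw p X \<beta> T t0) 0)"
proof -
  interpret prob_space M by (rule P)
  define L where "L = integral {0..1} (\<lambda>\<tau>. p \<tau> * expectation (X (t0 + \<beta> * T * \<tau>)))"
  have t00: "t0 \<ge> 0" "t0 + \<beta>*T \<ge> 0" using I(3) t0 T(2) by auto
  have pos: "t0 + \<beta>*T*\<tau> \<ge> 0" if "\<tau> \<in> {0..1}" for \<tau>
  proof -
    have "t0 + \<beta>*T*\<tau> = (1-\<tau>)*t0 + \<tau>*(t0+\<beta>*T)" by (simp add: algebra_simps)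
    moreover have "(1-\<tau>)*t0 \<ge> 0" "\<tau>*(t0+\<beta>*T) \<ge> 0" using that t00 by auto
    ultimately show ?thesis by linarith
  qed
  have frac: "real i / real m \<in> {0..1}" if "i \<le> m" for i m :: nat
    using that by (cases "m = 0") (auto simp: divide_simps)
  have bT: "\<beta>*T \<noteq> 0" using beta T by auto
  obtain B where B0: "\<forall>m i. i \<le> m \<longrightarrow> \<bar>qw m i\<bar> \<le> B" using w_bdd by (elim exE)
  have B: "\<bar>qw m i\<bar> \<le> B" if "i \<le> m" for m i using B0 that by blast
  have qw0: "qw m i \<ge> 0" if "i \<le> m" for m i
  proof (cases "i = 0")
    case True then show ?thesis using w_end(1)[of m] by simp
  next
    case i0: False
    show ?thesis
    proof (cases "i = m")
      case True then show ?thesis using w_end(2)[of m] by simp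
    next
      case False
      then have "0 < i" "i < m" using i0 that by auto
      then show ?thesis using w_pos[of i m] by linarith
    qed
  qed
  have vc: "continuous_on {0..1} (\<lambda>\<tau>. variance (X (t0+\<beta>*T*\<tau>)))"
    by (rule continuous_on_compose2[OF var_cont]) (use pos in \<open>auto intro!: continuous_intros\<close>)
  obtain \<tau>0 where \<tau>0: "\<tau>0 \<in> {0..1}" "\<And>\<tau>. \<tau>\<in>{0..1} \<Longrightarrow> variance (X (t0+\<beta>*T*\<tau>)) \<le> variance (X (t0+\<beta>*T*\<tau>0))"
    using continuous_attains_sup[OF compact_Icc _ vc] by auto
  define V where "V = variance (X (t0+\<beta>*T*\<tau>0))"
  have var_nn: "variance Y \<ge> 0" for Y :: "'w \<Rightarrow> real" by (rule Bochner_Integration.integral_nonneg) simp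
  define s where "s m i = t0 + \<beta>*T*(real i / real m)" for m i :: nat
  define c where "c m i = qw m i / real m * p (real i / real m)" for m i :: nat
  define A where "A m = (\<Sum>i\<in>{0..m}. (c m i)^2 * variance (X (s m i)))" for m
  define D where "D m = (\<Sum>i\<in>{0..m}. c m i * expectation (X (s m i)))" for m
  have s_pos: "s m i \<ge> 0" if "i \<le> m" for m i unfolding s_def using pos[OF frac[OF that]] .
  have s_inj: "s m i \<noteq> s m j" if "i \<le> m" "j \<le> m" "i \<noteq> j" for m i j
  proof -
    have m: "real m \<noteq> 0" using that by auto
    then have "real i / real m \<noteq> real j / real m" using that by (simp add: divide_simps)
    then show ?thesis using bT by (simp add: s_def)
  qed
  have E: "expectation (\<lambda>x. (noise_err qw p X \<beta> T t0 m x - L')^2) = A m + (D m - L')^2" for m L'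
  proof -
    have "expectation (\<lambda>x. (noise_err qw p X \<beta> T t0 m x - L')^2) =
        expectation (\<lambda>x. ((\<Sum>i\<in>{0..m}. c m i * X (s m i) x) - L')^2)"
      by (simp add: noise_err_def c_def s_def)
    also have "\<dots> = A m + (D m - L')^2" unfolding A_def D_def
      by (rule ms_sum) (use rv L2 indep s_pos s_inj in auto)
    finally show ?thesis .
  qed
  have Dlim: "D \<longlonglongrightarrow> L"
  proof -
    have "D = (\<lambda>m. \<Sum>i=0..m. qw m i / real m * (p (real i / real m) * expectation (X (t0 + \<beta> * T * (real i / real m)))))"
      by (simp add: fun_eq_iff D_def c_def s_def mult_ac)
    then show ?thesis using conv2 by (simp add: quad_conv_def L_def)
  qed
  define S1 where "S1 m = (\<Sum>i=0..m. qw m i / real m * (p (real i / real m))^2)" for m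
  have S1lim: "S1 \<longlonglongrightarrow> integral {0..1} (\<lambda>\<tau>. (p \<tau>)^2)"
    using conv1 by (simp add: quad_conv_def S1_def[abs_def])
  have Ann: "0 \<le> A m" for m unfolding A_def by (intro sum_nonneg mult_nonneg_nonneg var_nn) auto
  have Ale: "A m \<le> S1 m * (B * V / real m)" for m
  proof -
    have "(c m i)^2 * variance (X (s m i)) \<le> (qw m i / real m * (p (real i / real m))^2) * (B * V / real m)"
      if i: "i \<in> {0..m}" for i
    proof -
      have q0: "qw m i / real m \<ge> 0" using qw0 i by auto
      have qB: "qw m i / real m \<le> B / real m" using B[of i m] i by (intro divide_right_mono) auto
      have v0: "variance (X (s m i)) \<ge> 0" by (rule var_nn)
      have im: "i \<le> m" using i by simp
      have vV: "variance (X (s m i)) \<le> V" unfolding V_def s_def by (rule \<tau>0(2)[OF frac[OF im]])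
      have "qw m i / real m * variance (X (s m i)) \<le> B / real m * V"
        by (rule mult_mono[OF qB vV _ v0]) (use q0 qB in linarith)
      then have "(qw m i / real m * (p (real i / real m))^2) * (qw m i / real m * variance (X (s m i)))
           \<le> (qw m i / real m * (p (real i / real m))^2) * (B / real m * V)"
        by (rule mult_left_mono) (use q0 in \<open>simp_all only: mult_nonneg_nonneg zero_le_power2\<close>)
      then show ?thesis by (simp add: c_def power2_eq_square mult_ac)
    qed
    then have "A m \<le> (\<Sum>i=0..m. (qw m i / real m * (p (real i / real m))^2) * (B * V / real m))"
      unfolding A_def by (intro sum_mono) auto
    then show ?thesis by (simp only: S1_def sum_distrib_right)
  qed
  have main: "ms_conv M (noise_err qw p X \<beta> T t0) L"
  proof -
    have lim0: "(\<lambda>m. S1 m * (B * V / real m) + (D m - L)^2) \<longlonglongrightarrow> 0"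
    proof -
      have "(\<lambda>m. S1 m * (B * V / real m) + (D m - L)^2) \<longlonglongrightarrow> integral {0..1} (\<lambda>\<tau>. (p \<tau>)^2) * 0 + (L - L)^2"
        by (intro tendsto_intros S1lim Dlim)
      then show ?thesis by simp
    qed
    show ?thesis unfolding ms_conv_def E
    proof (rule tendsto_sandwich[OF _ _ tendsto_const lim0])
      show "\<forall>\<^sub>F m in sequentially. 0 \<le> A m + (D m - L)^2" using Ann by (auto intro: add_nonneg_nonneg)
      show "\<forall>\<^sub>F m in sequentially. A m + (D m - L)^2 \<le> S1 m * (B * V / real m) + (D m - L)^2"
        using Ale by auto
    qed
  qed
  have L0: "L = 0" if ex: "\<exists>\<nu>::nat \<Rightarrow> real. \<forall>\<tau>\<ge>0. expectation (X \<tau>) = (\<Sum>i<n. \<nu> i * \<tau> ^ i)"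
  proof -
    obtain \<nu> :: "nat \<Rightarrow> real" where \<nu>: "\<And>\<tau>. \<tau> \<ge> 0 \<Longrightarrow> expectation (X \<tau>) = (\<Sum>i<n. \<nu> i * \<tau> ^ i)"
      using ex by blast
    define Qm where "Qm = (\<Sum>i<n. smult (\<nu> i) ([:t0, \<beta>*T:]^i))"
    have Qeq: "expectation (X (t0 + \<beta>*T*\<tau>)) = poly Qm \<tau>" if "\<tau> \<in> {0..1}" for \<tau>
      using \<nu>[OF pos[OF that]] by (simp add: Qm_def poly_sum algebra_simps)
    have "L = integral {0..1} (\<lambda>\<tau>. p \<tau> * poly Qm \<tau>)"
      unfolding L_def by (rule integral_cong) (simp add: Qeq)
    also have "\<dots> = 0"
    proof (cases "n = 0")
      case True then show ?thesis by (simp add: Qm_def)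
    next
      case False
      have "degree Qm \<le> n - 1" unfolding Qm_def
      proof (rule degree_sum_le)
        fix i assume "i \<in> {..<n}"
        have "degree (smult (\<nu> i) ([:t0, \<beta>*T:]^i)) \<le> degree ([:t0, \<beta>*T:]^i)" by (rule degree_smult_le)
        also have "\<dots> \<le> degree [:t0, \<beta>*T:] * i" by (rule degree_power_le)
        also have "\<dots> \<le> i" by simp
        finally show "degree (smult (\<nu> i) ([:t0, \<beta>*T:]^i)) \<le> n - 1" using \<open>i \<in> {..<n}\<close> by simp
      qed simp
      then have "degree Qm < n" using False by linarith
      then have "((\<lambda>\<tau>. p \<tau> * poly Qm \<tau>) has_integral 0) {0..1}"
        unfolding p_def using kappa mu False by (intro kernel_annih) auto
      then show ?thesis by (rule integral_unique)
    qed
    finally show ?thesis .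
  qed
  show ?thesis
  proof
    show "ms_conv M (noise_err qw p X \<beta> T t0)
           (integral {0..1} (\<lambda>\<tau>. p \<tau> * expectation (X (t0 + \<beta> * T * \<tau>))))"
      using main unfolding L_def .
    show "(\<exists>\<nu>::nat \<Rightarrow> real. \<forall>\<tau>\<ge>0. expectation (X \<tau>) = (\<Sum>i<n. \<nu> i * \<tau> ^ i))
            \<longrightarrow> ms_conv M (noise_err qw p X \<beta> T t0) 0"
    proof
      assume h: "\<exists>\<nu>::nat \<Rightarrow> real. \<forall>\<tau>\<ge>0. expectation (X \<tau>) = (\<Sum>i<n. \<nu> i * \<tau> ^ i)"
      show "ms_conv M (noise_err qw p X \<beta> T t0) 0" using main L0[OF h] by simp
    qed
  qed
qed

end
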